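(* Let $0<q<1$, $m,n\in\mathbb N_0$, $z_1,z_2\in\mathbb C$. (i) If $|bq|<1$ and $u,v\in\mathbb C$ are sufficiently small (e.g. $|uz_1|,|vz_2|,|uv|<1$), then $$\sum_{m,n=0}^\infty\frac{p_{m,n}(z_1,z_2;b|q)}{(q;q)_m(q;q)_n}u^mv^n=(bq;q)_\infty\sum_{j=0}^\infty\frac{(bq)^j}{(q;q)_j}\frac{(uvq^j;q)_\infty}{(uz_1q^j,vz_2q^j;q)_\infty}=\frac{(bq,uv;q)_\infty}{(uz_1,vz_2;q)_\infty}\sum_{j=0}^\infty\frac{(uz_1,vz_2;q)_j}{(q,uv;q)_j}(bq)^j.$$ (ii) If $|bq|<1$, $|cq|<1$ and $b\ne0$, then $$\frac{p_{m,n}(z_1,z_2;b|q)}{(bq;q)_\infty}=\sum_{j=0}^\infty\frac{(c/b;q)_j}{(q;q)_j}\big(bq^{\frac{m+n}2+1}\big)^j\frac{p_{m,n}(z_1q^{j/2},z_2q^{j/2};c|q)}{(cq;q)_\infty}.$$ (iii) If $|bq|<1$, then $$\frac{p_{m,n}(z_1,z_2;b|q)}{(bq;q)_\infty}=\sum_{j=0}^\infty\frac{\big(bq^{(m+n)/2+1}\big)^j}{(q;q)_j}H_{m,n}(z_1q^{j/2},z_2q^{j/2}|q),$$ and conversely $$H_{m,n}(z_1,z_2|q)=\frac{1}{(bq;q)_\infty}\sum_{k=0}^\infty\frac{\big(-bq^{(m+n)/2+1}\big)^k}{(q;q)_k}q^{\binom k2}p_{m,n}(z_1q^{k/2},z_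2q^{k/2};b|q).$$
   Context: $(a;q)_n=\prod_{j=0}^{n-1}(1-aq^j)$, $(a;q)_\infty=\prod_{j\ge0}(1-aq^j)$, $(a_1,\dots,a_r;q)_n=\prod_i(a_i;q)_n$, $\left[{m\atop k}\right]_q=\frac{(q;q)_m}{(q;q)_k(q;q)_{m-k}}$, $m\wedge n=\min\{m,n\}$. The first $q$-$2D$-Hermite polynomials are $$H_{m,n}(z_1,z_2|q)=\sum_{k=0}^{m\wedge n}\left[{m\atop k}\right]_q\left[{n\atop k}\right]_q(-1)^kq^{\binom k2}(q;q)_k\,z_1^{m-k}z_2^{n-k},$$ and the $q$-$2D$ ultraspherical polynomials are $$p_{m,n}(z_1,z_2;b|q)=\sum_{k=0}^{m\wedge n}\left[{m\atop k}\right]_q\left[{n\atop k}\right]_q(-1)^kq^{\binom k2}(q;q)_k\,(bq;q)_{m+n-k}\,z_1^{m-k}z_2^{n-k}.$$ *)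

theory Defs
  imports "HOL-Analysis.Analysis"
begin

definition qpoch :: "complex \<Rightarrow> complex \<Rightarrow> nat \<Rightarrow> complex" where
  "qpoch a q n = (\<Prod>j<n. 1 - a * q ^ j)"

definition qpoch_inf :: "complex \<Rightarrow> complex \<Rightarrow> complex" where
  "qpoch_inf a q = lim (\<lambda>N. qpoch a q N)"

text \<open>Gaussian q-binomial coefficient [m choose k]_q (used for k \<le> m).\<close>
definition qbinom :: "complex \<Rightarrow> nat \<Rightarrow> nat \<Rightarrow> complex" where
  "qbinom q m k = qpoch q q m / (qpoch q q k * qpoch q q (m - k))"

definition qH :: "complex \<Rightarrow> complex \<Rightarrow> complex \<Rightarrow> nat \<Rightarrow> nat \<Rightarrow> complex" where
  "qH z1 z2 q m n = (\<Sum>k\<le>min m n. qbinom q m k * qbinom q n k * (-1) ^ k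
      * q ^ (k choose 2) * qpoch q q k * z1 ^ (m - k) * z2 ^ (n - k))"

definition qp :: "complex \<Rightarrow> complex \<Rightarrow> complex \<Rightarrow> complex \<Rightarrow> nat \<Rightarrow> nat \<Rightarrow> complex" where
  "qp z1 z2 b q m n = (\<Sum>k\<le>min m n. qbinom q m k * qbinom q n k * (-1) ^ k
      * q ^ (k choose 2) * qpoch q q k * qpoch (b * q) q (m + n - k)
      * z1 ^ (m - k) * z2 ^ (n - k))"

end

theory Submission
  imports Defs
begin


lemma qpoch_Suc: "qpoch a Q (Suc n) = qpoch a Q n * (1 - a * Q ^ n)"
  by (simp add: qpoch_def)

lemma qpoch_0[simp]: "qpoch a Q 0 = 1"
  by (simp add: qpoch_def)

lemma qpoch_conv:
  fixes a Q :: complex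
  assumes "norm Q < 1"
  shows "(\<lambda>N. qpoch a Q N) \<longlonglongrightarrow> prodinf (\<lambda>j. 1 - a * Q ^ j)"
    and "convergent_prod (\<lambda>j. 1 - a * Q ^ j)"
proof -
  have "summable (\<lambda>j. norm ((1 - a * Q ^ j) - 1))"
  proof -
    have "summable (\<lambda>j. norm a * norm Q ^ j)"
      using assms by (intro summable_mult summable_geometric) auto
    then show ?thesis by (simp add: norm_mult norm_power)
  qed
  then have "abs_convergent_prod (\<lambda>j. 1 - a * Q ^ j)"
    by (rule summable_imp_abs_convergent_prod)
  then show cp: "convergent_prod (\<lambda>j. 1 - a * Q ^ j)"
    by (rule abs_convergent_prod_imp_convergent_prod)
  from convergent_prod_LIMSEQ[OF cp]
  have "(\<lambda>n. qpoch a Q (Suc n)) \<longlonglongrightarrow> prodinf (\<lambda>j. 1 - a * Q ^ j)"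
    by (simp add: qpoch_def lessThan_Suc_atMost)
  then show "(\<lambda>N. qpoch a Q N) \<longlonglongrightarrow> prodinf (\<lambda>j. 1 - a * Q ^ j)"
    by (simp add: filterlim_sequentially_Suc)
qed

lemma qpoch_inf_eq:
  fixes a Q :: complex
  assumes "norm Q < 1"
  shows "qpoch_inf a Q = prodinf (\<lambda>j. 1 - a * Q ^ j)"
  unfolding qpoch_inf_def using qpoch_conv(1)[OF assms] by (rule limI)

lemma qpoch_lim:
  fixes a Q :: complex
  assumes "norm Q < 1"
  shows "(\<lambda>N. qpoch a Q N) \<longlonglongrightarrow> qpoch_inf a Q"
  using qpoch_conv(1)[OF assms] qpoch_inf_eq[OF assms] by simp

lemma factor_nz:
  fixes a Q :: complex
  assumes "norm Q \<le> 1" "norm a < 1"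
  shows "1 - a * Q ^ j \<noteq> 0"
proof
  assume "1 - a * Q ^ j = 0"
  then have "norm (a * Q ^ j) = 1" by (metis eq_iff_diff_eq_0 norm_one)
  moreover have "norm (a * Q ^ j) \<le> norm a"
    using assms by (simp add: norm_mult norm_power mult_left_le power_le_one)
  ultimately show False using assms by simp
qed

lemma qpoch_nz:
  fixes a Q :: complex
  assumes "norm Q \<le> 1" "norm a < 1"
  shows "qpoch a Q n \<noteq> 0"
  unfolding qpoch_def using factor_nz[OF assms] by (simp add: prod_zero_iff)

lemma qpoch_inf_nz:
  fixes a Q :: complex
  assumes "norm Q < 1" "norm a < 1"
  shows "qpoch_inf a Q \<noteq> 0"
  unfolding qpoch_inf_eq[OF assms(1)]
  by (rule prodinf_nonzero[OF qpoch_conv(2)[OF assms(1)]]) (use factor_nz assms in auto)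

lemma qpoch_add: "qpoch a Q (k + N) = qpoch a Q k * qpoch (a * Q ^ k) Q N"
  by (induction N) (simp_all add: qpoch_Suc power_add mult_ac)

lemma qpoch_inf_shift:
  fixes a Q :: complex
  assumes "norm Q < 1" "qpoch a Q k \<noteq> 0"
  shows "qpoch_inf (a * Q ^ k) Q = qpoch_inf a Q / qpoch a Q k"
proof -
  have "(\<lambda>N. qpoch a Q (N + k) / qpoch a Q k) \<longlonglongrightarrow> qpoch_inf a Q / qpoch a Q k"
    by (rule tendsto_divide[OF LIMSEQ_ignore_initial_segment[OF qpoch_lim[OF assms(1)]] tendsto_const assms(2)])
  moreover have "(\<lambda>N. qpoch a Q (N + k) / qpoch a Q k) = (\<lambda>N. qpoch (a * Q ^ k) Q N)"
  proof
    fix N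
    have "qpoch a Q (N + k) = qpoch a Q k * qpoch (a * Q ^ k) Q N"
      by (subst add.commute) (rule qpoch_add)
    then show "qpoch a Q (N + k) / qpoch a Q k = qpoch (a * Q ^ k) Q N" using assms(2) by simp
  qed
  ultimately show ?thesis using qpoch_lim[OF assms(1), of "a * Q ^ k"] LIMSEQ_unique by metis
qed

lemma qpoch_inf_zero: "norm Q < 1 \<Longrightarrow> qpoch_inf 0 Q = 1"
  using qpoch_lim[of Q 0] by (simp add: qpoch_def LIMSEQ_const_iff)



definition gc :: "complex \<Rightarrow> complex \<Rightarrow> complex \<Rightarrow> nat \<Rightarrow> complex" where
  "gc \<alpha> \<beta> Q j = (\<Prod>i<j. \<alpha> - \<beta> * Q ^ i) / qpoch Q Q j"

lemma norm_mult_lt1: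
  fixes a b :: complex
  assumes "norm a \<le> 1" "norm b < 1"
  shows "norm (a * b) < 1"
proof -
  have "norm a * norm b \<le> norm b" using assms by (intro mult_left_le_one_le) auto
  then show ?thesis using assms by (simp add: norm_mult)
qed

lemma gc_bounded:
  fixes \<alpha> \<beta> Q :: complex
  assumes Q: "norm Q < 1" and al: "norm \<alpha> \<le> 1"
  shows "\<exists>C. \<forall>j. norm (gc \<alpha> \<beta> Q j) \<le> C"
proof -
  define r where "r = norm Q"
  have r: "0 \<le> r" "r < 1" using Q by (auto simp: r_def)
  have num: "norm (\<Prod>i<j. \<alpha> - \<beta> * Q ^ i) \<le> exp (norm \<beta> / (1 - r))" for j
  proof -
    have "norm (\<Prod>i<j. \<alpha> - \<beta> * Q ^ i) = (\<Prod>i<j. norm (\<alpha> - \<beta> * Q ^ i))"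
      by (simp add: prod_norm)
    also have "\<dots> \<le> (\<Prod>i<j. exp (norm \<beta> * r ^ i))"
    proof (rule prod_mono, safe)
      fix i
      have "norm (\<alpha> - \<beta> * Q ^ i) \<le> norm \<alpha> + norm (\<beta> * Q ^ i)" by (rule norm_triangle_ineq4)
      also have "\<dots> \<le> 1 + norm \<beta> * r ^ i" using al by (simp add: norm_mult norm_power r_def)
      also have "\<dots> \<le> exp (norm \<beta> * r ^ i)" by (rule exp_ge_add_one_self)
      finally show "norm (\<alpha> - \<beta> * Q ^ i) \<le> exp (norm \<beta> * r ^ i)" .
    qed simp
    also have "\<dots> = exp (\<Sum>i<j. norm \<beta> * r ^ i)" by (simp add: exp_sum)
    also have "(\<Sum>i<j. norm \<beta> * r ^ i) \<le> norm \<beta> / (1 - r)"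
    proof -
      have "(\<Sum>i<j. r ^ i) \<le> (\<Sum>i. r ^ i)"
        using r by (intro sum_le_suminf) auto
      also have "\<dots> = 1 / (1 - r)" using r by (intro suminf_geometric) auto
      finally have "(\<Sum>i<j. r ^ i) \<le> 1 / (1 - r)" .
      then have "norm \<beta> * (\<Sum>i<j. r ^ i) \<le> norm \<beta> * (1 / (1 - r))"
        by (intro mult_left_mono) auto
      then show ?thesis by (simp add: sum_distrib_left)
    qed
    then have "exp (\<Sum>i<j. norm \<beta> * r ^ i) \<le> exp (norm \<beta> / (1 - r))" by simp
    finally show ?thesis .
  qed
  have "(\<lambda>j. inverse (qpoch Q Q j)) \<longlonglongrightarrow> inverse (qpoch_inf Q Q)"
    by (intro tendsto_inverse qpoch_lim qpoch_inf_nz Q)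
  then have "Bseq (\<lambda>j. inverse (qpoch Q Q j))"
    by (intro convergent_imp_Bseq convergentI)
  then obtain K where K: "\<forall>j. norm (inverse (qpoch Q Q j)) \<le> K" by (auto elim: BseqE)
  have "\<forall>j. norm (gc \<alpha> \<beta> Q j) \<le> exp (norm \<beta> / (1 - r)) * K"
  proof
    fix j
    have "norm (gc \<alpha> \<beta> Q j) = norm (\<Prod>i<j. \<alpha> - \<beta> * Q ^ i) * norm (inverse (qpoch Q Q j))"
      by (simp add: gc_def divide_inverse norm_mult)
    also have "\<dots> \<le> exp (norm \<beta> / (1 - r)) * K"
      by (intro mult_mono num K[rule_format]) auto
    finally show "norm (gc \<alpha> \<beta> Q j) \<le> exp (norm \<beta> / (1 - r)) * K" .
  qed
  then show ?thesis by (rule exI)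
qed

lemma gc_summable:
  fixes \<alpha> \<beta> Q y :: complex
  assumes Q: "norm Q < 1" and al: "norm \<alpha> \<le> 1" and y: "norm y < 1"
  shows "summable (\<lambda>j. norm (gc \<alpha> \<beta> Q j * y ^ j))"
proof -
  obtain C where C: "\<And>j. norm (gc \<alpha> \<beta> Q j) \<le> C" using gc_bounded[OF Q al] by blast
  show ?thesis
  proof (rule summable_comparison_test')
    show "summable (\<lambda>j. C * norm y ^ j)" using y by (intro summable_mult summable_geometric) auto
    fix j
    show "norm (norm (gc \<alpha> \<beta> Q j * y ^ j)) \<le> C * norm y ^ j"
      by (simp add: norm_mult norm_power) (intro mult_right_mono C, auto)
  qed
qed

lemma series_shift:
  fixes d :: "nat \<Rightarrow> complex"
  assumes "summable (\<lambda>j. d j * y ^ j)"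
  shows "(1 - t * y) * (\<Sum>j. d j * y ^ j) = d 0 + (\<Sum>j. (d (Suc j) - t * d j) * y ^ Suc j)"
proof -
  define S where "S = (\<Sum>j. d j * y ^ j)"
  have s: "(\<lambda>j. d j * y ^ j) sums S" using assms by (simp add: S_def summable_sums)
  have s1: "(\<lambda>j. d (Suc j) * y ^ Suc j) sums (S - d 0)"
    using s by (subst sums_Suc_iff) simp
  have s2: "(\<lambda>j. t * y * (d j * y ^ j)) sums (t * y * S)" using s by (rule sums_mult)
  have "(\<lambda>j. d (Suc j) * y ^ Suc j - t * y * (d j * y ^ j)) sums (S - d 0 - t * y * S)"
    using s1 s2 by (rule sums_diff)
  moreover have "(\<lambda>j. d (Suc j) * y ^ Suc j - t * y * (d j * y ^ j)) = (\<lambda>j. (d (Suc j) - t * d j) * y ^ Suc j)"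
    by (simp add: algebra_simps)
  ultimately have "(\<lambda>j. (d (Suc j) - t * d j) * y ^ Suc j) sums (S - d 0 - t * y * S)" by simp
  then have "(\<Sum>j. (d (Suc j) - t * d j) * y ^ Suc j) = S - d 0 - t * y * S" by (rule sums_unique[symmetric])
  then show ?thesis unfolding S_def[symmetric] by (simp add: algebra_simps)
qed

lemma gc_Suc:
  fixes \<alpha> \<beta> Q :: complex
  assumes Q: "norm Q < 1"
  shows "gc \<alpha> \<beta> Q (Suc j) * (1 - Q ^ Suc j) = gc \<alpha> \<beta> Q j * (\<alpha> - \<beta> * Q ^ j)"
proof -
  have nz: "qpoch Q Q j \<noteq> 0" "1 - Q * Q ^ j \<noteq> 0"
    using qpoch_nz[of Q Q j] factor_nz[of Q Q j] Q by auto
  show ?thesis using nz by (simp add: gc_def qpoch_Suc field_simps)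
qed

lemma gc_0[simp]: "gc \<alpha> \<beta> Q 0 = 1" by (simp add: gc_def)

lemma gc_FE:
  fixes \<alpha> \<beta> Q y :: complex
  assumes Q: "norm Q < 1" and al: "norm \<alpha> \<le> 1" and y: "norm y < 1"
  shows "(1 - \<alpha> * y) * (\<Sum>j. gc \<alpha> \<beta> Q j * y ^ j) = (1 - \<beta> * y) * (\<Sum>j. gc \<alpha> \<beta> Q j * (Q * y) ^ j)"
proof -
  let ?c = "gc \<alpha> \<beta> Q"
  have s1: "summable (\<lambda>j. ?c j * y ^ j)"
    using gc_summable[OF Q al y] by (rule summable_norm_cancel)
  have Qy: "norm (Q * y) < 1" using Q y by (intro norm_mult_lt1) auto
  have s2: "summable (\<lambda>j. (?c j * Q ^ j) * y ^ j)"
    using summable_norm_cancel[OF gc_summable[OF Q al Qy]] by (simp add: power_mult_distrib mult_ac)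
  have e2: "(\<Sum>j. ?c j * (Q * y) ^ j) = (\<Sum>j. (?c j * Q ^ j) * y ^ j)"
    by (simp add: power_mult_distrib mult_ac)
  have coef: "?c (Suc j) - \<alpha> * ?c j = ?c (Suc j) * Q ^ Suc j - \<beta> * (?c j * Q ^ j)" for j
    using gc_Suc[OF Q, of \<alpha> \<beta> j] by (simp add: algebra_simps)
  show ?thesis
    unfolding e2 series_shift[OF s1] series_shift[OF s2] by (simp add: coef)
qed

lemma gc_series:
  fixes \<alpha> \<beta> Q x :: complex
  assumes Q: "norm Q < 1" and al: "norm \<alpha> \<le> 1" and x: "norm x < 1"
  shows "(\<lambda>j. gc \<alpha> \<beta> Q j * x ^ j) sums (qpoch_inf (\<beta> * x) Q / qpoch_inf (\<alpha> * x) Q)"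
    and "summable (\<lambda>j. norm (gc \<alpha> \<beta> Q j * x ^ j))"
proof -
  let ?c = "gc \<alpha> \<beta> Q"
  define F where "F y = (\<Sum>j. ?c j * y ^ j)" for y
  have nQN: "norm (Q ^ N * x) < 1" for N
  proof -
    have "norm (Q ^ N * x) \<le> norm x" using Q
      by (simp add: norm_mult norm_power mult_left_le_one_le power_le_one)
    then show ?thesis using x by simp
  qed
  have nzA: "1 - \<alpha> * (Q ^ N * x) \<noteq> 0" for N
  proof
    assume "1 - \<alpha> * (Q ^ N * x) = 0"
    then have "norm (\<alpha> * (Q ^ N * x)) = 1" by (metis eq_iff_diff_eq_0 norm_one)
    moreover have "norm (\<alpha> * (Q ^ N * x)) < 1" using al nQN[of N] by (rule norm_mult_lt1)
    ultimately show False by simp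
  qed
  have iter: "F x = (\<Prod>i<N. (1 - \<beta> * (Q ^ i * x)) / (1 - \<alpha> * (Q ^ i * x))) * F (Q ^ N * x)" for N
  proof (induction N)
    case 0 then show ?case by simp
  next
    case (Suc N)
    have "(1 - \<alpha> * (Q ^ N * x)) * F (Q ^ N * x) = (1 - \<beta> * (Q ^ N * x)) * F (Q * (Q ^ N * x))"
      unfolding F_def by (rule gc_FE[OF Q al nQN])
    then have "F (Q ^ N * x) = (1 - \<beta> * (Q ^ N * x)) / (1 - \<alpha> * (Q ^ N * x)) * F (Q ^ Suc N * x)"
      using nzA[of N] by (simp add: field_simps)
    then show ?case using Suc by (simp add: mult_ac)
  qed
  have cont: "isCont F 0"
    unfolding F_def
    by (rule isCont_powser[of _ "1/2"]) (use summable_norm_cancel[OF gc_summable[OF Q al, of "1/2"]] in auto)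
  have "(\<lambda>N. Q ^ N * x) \<longlonglongrightarrow> 0 * x"
    by (intro tendsto_mult LIMSEQ_power_zero tendsto_const Q)
  then have "(\<lambda>N. F (Q ^ N * x)) \<longlonglongrightarrow> F 0"
    using cont isCont_tendsto_compose by fastforce
  moreover have "F 0 = 1" unfolding F_def using powser_zero[of ?c] by simp
  ultimately have lim1: "(\<lambda>N. F (Q ^ N * x)) \<longlonglongrightarrow> 1" by simp
  have prodeq: "(\<Prod>i<N. (1 - \<beta> * (Q ^ i * x)) / (1 - \<alpha> * (Q ^ i * x))) = qpoch (\<beta> * x) Q N / qpoch (\<alpha> * x) Q N" for N
    unfolding qpoch_def by (subst prod_dividef) (simp_all add: mult_ac)
  have nzinf: "qpoch_inf (\<alpha> * x) Q \<noteq> 0"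
  proof (rule qpoch_inf_nz[OF Q])
    show "norm (\<alpha> * x) < 1" using al x by (intro norm_mult_lt1)
  qed
  have "(\<lambda>N. qpoch (\<beta> * x) Q N / qpoch (\<alpha> * x) Q N * F (Q ^ N * x)) \<longlonglongrightarrow> qpoch_inf (\<beta> * x) Q / qpoch_inf (\<alpha> * x) Q * 1"
    by (intro tendsto_mult tendsto_divide qpoch_lim Q lim1 nzinf)
  moreover have "(\<lambda>N. qpoch (\<beta> * x) Q N / qpoch (\<alpha> * x) Q N * F (Q ^ N * x)) = (\<lambda>N. F x)"
  proof
    fix N
    show "qpoch (\<beta> * x) Q N / qpoch (\<alpha> * x) Q N * F (Q ^ N * x) = F x"
      by (simp only: prodeq[symmetric] iter[of N, symmetric])
  qed
  ultimately have "F x = qpoch_inf (\<beta> * x) Q / qpoch_inf (\<alpha> * x) Q"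
    using LIMSEQ_const_iff by fastforce
  moreover have "summable (\<lambda>j. ?c j * x ^ j)"
    using gc_summable[OF Q al x] by (rule summable_norm_cancel)
  ultimately show "(\<lambda>j. gc \<alpha> \<beta> Q j * x ^ j) sums (qpoch_inf (\<beta> * x) Q / qpoch_inf (\<alpha> * x) Q)"
    unfolding F_def using summable_sums by fastforce
  show "summable (\<lambda>j. norm (gc \<alpha> \<beta> Q j * x ^ j))" by (rule gc_summable[OF Q al x])
qed



lemma prod_neg_pow: "(\<Prod>i<j. (0::complex) - 1 * Q ^ i) = (-1) ^ j * Q ^ (j choose 2)"
proof (induction j)
  case 0 then show ?case by (simp add: numeral_2_eq_2)
next
  case (Suc j)
  have "Suc j choose 2 = j + (j choose 2)"
    by (simp add: numeral_2_eq_2)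
  then show ?case using Suc by (simp add: power_add mult_ac)
qed

lemma euler1:
  fixes Q x :: complex
  assumes "norm Q < 1" "norm x < 1"
  shows "(\<lambda>j. x ^ j / qpoch Q Q j) sums (1 / qpoch_inf x Q)"
    and "summable (\<lambda>j. norm (x ^ j / qpoch Q Q j))"
proof -
  have e: "gc 1 0 Q j * x ^ j = x ^ j / qpoch Q Q j" for j by (simp add: gc_def)
  show "(\<lambda>j. x ^ j / qpoch Q Q j) sums (1 / qpoch_inf x Q)"
    using gc_series(1)[OF assms(1) _ assms(2), of 1 0] by (simp add: e qpoch_inf_zero assms)
  show "summable (\<lambda>j. norm (x ^ j / qpoch Q Q j))"
    using gc_series(2)[OF assms(1) _ assms(2), of 1 0] by (simp add: e)
qed

lemma euler2:
  fixes Q x :: complex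
  assumes "norm Q < 1" "norm x < 1"
  shows "(\<lambda>j. (-1) ^ j * Q ^ (j choose 2) / qpoch Q Q j * x ^ j) sums qpoch_inf x Q"
    and "summable (\<lambda>j. norm ((-1) ^ j * Q ^ (j choose 2) / qpoch Q Q j * x ^ j))"
proof -
  have e: "gc 0 1 Q j = (-1) ^ j * Q ^ (j choose 2) / qpoch Q Q j" for j
    by (simp only: gc_def prod_neg_pow)
  show "(\<lambda>j. (-1) ^ j * Q ^ (j choose 2) / qpoch Q Q j * x ^ j) sums qpoch_inf x Q"
    using gc_series(1)[OF assms(1) _ assms(2), of 0 1] by (simp add: e qpoch_inf_zero assms)
  show "summable (\<lambda>j. norm ((-1) ^ j * Q ^ (j choose 2) / qpoch Q Q j * x ^ j))"
    using gc_series(2)[OF assms(1) _ assms(2), of 0 1] by (simp add: e)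
qed

lemma qbinomial_thm:
  fixes Q a x :: complex
  assumes "norm Q < 1" "norm x < 1"
  shows "(\<lambda>j. qpoch a Q j / qpoch Q Q j * x ^ j) sums (qpoch_inf (a * x) Q / qpoch_inf x Q)"
proof -
  have e: "gc 1 a Q j = qpoch a Q j / qpoch Q Q j" for j by (simp add: gc_def qpoch_def)
  show ?thesis
    using gc_series(1)[OF assms(1) _ assms(2), of 1 a] by (simp add: e)
qed

lemma powlem_real:
  fixes q :: real
  assumes q: "0 < q" and km: "k \<le> m" and kn: "k \<le> n"
  shows "(q powr (real (m + n) / 2 + 1)) ^ j * ((q powr (real j / 2)) ^ (m - k) * (q powr (real j / 2)) ^ (n - k))
         = q ^ j * (q ^ (m + n - k)) ^ j"
proof -
  have "(q powr (real (m + n) / 2 + 1)) ^ j * ((q powr (real j / 2)) ^ (m - k) * (q powr (real j / 2)) ^ (n - k))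
      = q powr (real j * (real (m + n) / 2 + 1) + (real (m - k) * (real j / 2) + real (n - k) * (real j / 2)))"
  proof -
    have pp: "(q powr u) ^ t = q powr (real t * u)" for u t using q by (simp add: powr_power)
    show ?thesis by (simp only: pp powr_add[symmetric])
  qed
  also have "real j * (real (m + n) / 2 + 1) + (real (m - k) * (real j / 2) + real (n - k) * (real j / 2))
      = real (j + (m + n - k) * j)"
  proof -
    have kk: "k \<le> m + n" using km by simp
    have e1: "real (j + (m + n - k) * j) = real j + (real (m + n) - real k) * real j"
      by (simp only: of_nat_add of_nat_mult of_nat_diff[OF kk])
    have e2: "real (m - k) = real m - real k" "real (n - k) = real n - real k"
      using km kn by (simp_all add: of_nat_diff)
    show ?thesis unfolding e1 e2 by (simp add: field_simps)
  qed
  also have "q powr real (j + (m + n - k) * j) = q ^ j * (q ^ (m + n - k)) ^ j"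
    by (simp only: powr_realpow[OF q] power_add power_mult)
  finally show ?thesis .
qed

lemma powlem:
  fixes q :: real and b z1 z2 :: complex
  assumes q: "0 < q" and km: "k \<le> m" and kn: "k \<le> n"
  shows "(b * of_real (q powr (real (m + n) / 2 + 1))) ^ j *
          ((z1 * of_real (q powr (real j / 2))) ^ (m - k) * (z2 * of_real (q powr (real j / 2))) ^ (n - k))
       = (b * of_real q * of_real q ^ (m + n - k)) ^ j * (z1 ^ (m - k) * z2 ^ (n - k))"
proof -
  have r: "complex_of_real ((q powr (real (m + n) / 2 + 1)) ^ j * ((q powr (real j / 2)) ^ (m - k) * (q powr (real j / 2)) ^ (n - k)))
         = complex_of_real (q ^ j * (q ^ (m + n - k)) ^ j)"
    using powlem_real[OF assms] by simp
  have "(b * of_real (q powr (real (m + n) / 2 + 1))) ^ j *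
          ((z1 * of_real (q powr (real j / 2))) ^ (m - k) * (z2 * of_real (q powr (real j / 2))) ^ (n - k))
       = b ^ j * (z1 ^ (m - k) * z2 ^ (n - k)) * complex_of_real ((q powr (real (m + n) / 2 + 1)) ^ j * ((q powr (real j / 2)) ^ (m - k) * (q powr (real j / 2)) ^ (n - k)))"
    by (simp add: power_mult_distrib mult_ac)
  also have "\<dots> = b ^ j * (z1 ^ (m - k) * z2 ^ (n - k)) * complex_of_real (q ^ j * (q ^ (m + n - k)) ^ j)"
    by (simp only: r)
  also have "\<dots> = (b * of_real q * of_real q ^ (m + n - k)) ^ j * (z1 ^ (m - k) * z2 ^ (n - k))"
    by (simp add: power_mult_distrib mult_ac)
  finally show ?thesis .
qed



lemma nx_lt1:
  fixes Q b :: complex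
  assumes "norm Q < 1" "norm (b * Q) < 1"
  shows "norm (b * Q * Q ^ N) < 1"
proof -
  have "b * Q * Q ^ N = Q ^ N * (b * Q)" by simp
  moreover have "norm (Q ^ N) \<le> 1" using assms by (simp add: norm_power power_le_one)
  ultimately show ?thesis using norm_mult_lt1 assms by metis
qed

lemma qpoch_inf_shift':
  fixes Q b :: complex
  assumes "norm Q < 1" "norm (b * Q) < 1"
  shows "qpoch_inf (b * Q * Q ^ N) Q = qpoch_inf (b * Q) Q / qpoch (b * Q) Q N"
  using assms by (intro qpoch_inf_shift qpoch_nz) auto

lemma rr1: "(A::complex) / B * P * (T * C * X ^ a * Y ^ c / D) = (A / B * T * C / D) * (P * (X ^ a * Y ^ c))"
  by (simp add: divide_inverse mult_ac)
lemma rr2: "(A::complex) / B * T * C / D * (W ^ j * Z) = (T * C * Z / D) * (A / B * W ^ j)"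
  by (simp add: divide_inverse mult_ac)
lemma rr3: "(P::complex) / B * (T * X ^ a * Y ^ c) = (T / B) * (P * (X ^ a * Y ^ c))"
  by (simp add: divide_inverse mult_ac)
lemma rr4: "(T::complex) / B * (W ^ j * Z) = (T * Z) * (W ^ j / B)"
  by (simp add: divide_inverse mult_ac)
lemma rr5: "(M::complex) * P / B * E * (T * C * X ^ a * Y ^ c) = (M / B * E * T * C) * (P * (X ^ a * Y ^ c))"
  by (simp add: divide_inverse mult_ac)
lemma rr6: "(M::complex) / B * E * T * C * (W ^ j * Z) = (T * C * Z) * (M * E / B * W ^ j)"
  by (simp add: divide_inverse mult_ac)

lemma part_ii:
  fixes q :: real and b c z1 z2 :: complex and m n :: nat
  assumes q: "0 < q" "q < 1" and nb: "norm (b * of_real q) < 1"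
    and nc: "norm (c * of_real q) < 1" and b0: "b \<noteq> 0"
  shows "(\<lambda>j. qpoch (c / b) (of_real q) j / qpoch (of_real q) (of_real q) j
          * (b * of_real (q powr (real (m + n) / 2 + 1))) ^ j
          * (qp (z1 * of_real (q powr (real j / 2))) (z2 * of_real (q powr (real j / 2))) c (of_real q) m n
             / qpoch_inf (c * of_real q) (of_real q)))
      sums (qp z1 z2 b (of_real q) m n / qpoch_inf (b * of_real q) (of_real q))"
proof -
  define Q where "Q = complex_of_real q"
  have nQ: "norm Q < 1" using q by (simp add: Q_def)
  have nb': "norm (b * Q) < 1" and nc': "norm (c * Q) < 1" using nb nc by (simp_all add: Q_def)
  define T where "T k = qbinom Q m k * qbinom Q n k * (-1) ^ k * Q ^ (k choose 2) * qpoch Q Q k" for k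
  define R where "R k = T k * qpoch (c * Q) Q (m + n - k) * (z1 ^ (m - k) * z2 ^ (n - k)) / qpoch_inf (c * Q) Q" for k
  define x where "x k = b * Q * Q ^ (m + n - k)" for k
  have nx: "norm (x k) < 1" for k unfolding x_def by (rule nx_lt1[OF nQ nb'])
  have termeq: "qpoch (c / b) Q j / qpoch Q Q j
          * (b * of_real (q powr (real (m + n) / 2 + 1))) ^ j
          * (qp (z1 * of_real (q powr (real j / 2))) (z2 * of_real (q powr (real j / 2))) c Q m n
             / qpoch_inf (c * Q) Q)
        = (\<Sum>k\<le>min m n. R k * (qpoch (c / b) Q j / qpoch Q Q j * x k ^ j))" for j
  proof -
    have "qpoch (c / b) Q j / qpoch Q Q j
          * (b * of_real (q powr (real (m + n) / 2 + 1))) ^ j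
          * (qp (z1 * of_real (q powr (real j / 2))) (z2 * of_real (q powr (real j / 2))) c Q m n
             / qpoch_inf (c * Q) Q)
        = (\<Sum>k\<le>min m n. qpoch (c / b) Q j / qpoch Q Q j
          * (b * of_real (q powr (real (m + n) / 2 + 1))) ^ j
          * (T k * qpoch (c * Q) Q (m + n - k) * (z1 * of_real (q powr (real j / 2))) ^ (m - k)
               * (z2 * of_real (q powr (real j / 2))) ^ (n - k) / qpoch_inf (c * Q) Q))"
      unfolding qp_def T_def by (simp add: sum_distrib_left sum_divide_distrib)
    also have "\<dots> = (\<Sum>k\<le>min m n. R k * (qpoch (c / b) Q j / qpoch Q Q j * x k ^ j))"
    proof (rule sum.cong[OF refl])
      fix k assume "k \<in> {..min m n}"
      then have km: "k \<le> m" and kn: "k \<le> n" by auto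
      have "qpoch (c / b) Q j / qpoch Q Q j
          * (b * of_real (q powr (real (m + n) / 2 + 1))) ^ j
          * (T k * qpoch (c * Q) Q (m + n - k) * (z1 * of_real (q powr (real j / 2))) ^ (m - k)
               * (z2 * of_real (q powr (real j / 2))) ^ (n - k) / qpoch_inf (c * Q) Q)
        = (qpoch (c / b) Q j / qpoch Q Q j * T k * qpoch (c * Q) Q (m + n - k) / qpoch_inf (c * Q) Q)
          * ((b * of_real (q powr (real (m + n) / 2 + 1))) ^ j *
          ((z1 * of_real (q powr (real j / 2))) ^ (m - k) * (z2 * of_real (q powr (real j / 2))) ^ (n - k)))"
        by (rule rr1)
      also have "\<dots> = (qpoch (c / b) Q j / qpoch Q Q j * T k * qpoch (c * Q) Q (m + n - k) / qpoch_inf (c * Q) Q)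
          * ((b * of_real q * of_real q ^ (m + n - k)) ^ j * (z1 ^ (m - k) * z2 ^ (n - k)))"
        by (simp only: powlem[OF q(1) km kn])
      also have "\<dots> = R k * (qpoch (c / b) Q j / qpoch Q Q j * x k ^ j)"
        unfolding R_def x_def Q_def by (rule rr2)
      finally show "qpoch (c / b) Q j / qpoch Q Q j
          * (b * of_real (q powr (real (m + n) / 2 + 1))) ^ j
          * (T k * qpoch (c * Q) Q (m + n - k) * (z1 * of_real (q powr (real j / 2))) ^ (m - k)
               * (z2 * of_real (q powr (real j / 2))) ^ (n - k) / qpoch_inf (c * Q) Q)
          = R k * (qpoch (c / b) Q j / qpoch Q Q j * x k ^ j)" .
    qed
    finally show ?thesis .
  qed
  have ser: "(\<lambda>j. \<Sum>k\<le>min m n. R k * (qpoch (c / b) Q j / qpoch Q Q j * x k ^ j))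
      sums (\<Sum>k\<le>min m n. R k * (qpoch_inf (c / b * x k) Q / qpoch_inf (x k) Q))"
    by (intro sums_sum sums_mult qbinomial_thm nQ nx)
  have val: "(\<Sum>k\<le>min m n. R k * (qpoch_inf (c / b * x k) Q / qpoch_inf (x k) Q))
      = qp z1 z2 b Q m n / qpoch_inf (b * Q) Q"
  proof -
    have "R k * (qpoch_inf (c / b * x k) Q / qpoch_inf (x k) Q)
        = T k * qpoch (b * Q) Q (m + n - k) * (z1 ^ (m - k) * z2 ^ (n - k)) / qpoch_inf (b * Q) Q" for k
    proof -
      have cx: "c / b * (b * Q * Q ^ (m + n - k)) = c * Q * Q ^ (m + n - k)" using b0 by simp
      have nz: "qpoch (c * Q) Q (m + n - k) \<noteq> 0" "qpoch (b * Q) Q (m + n - k) \<noteq> 0"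
        "qpoch_inf (c * Q) Q \<noteq> 0" "qpoch_inf (b * Q) Q \<noteq> 0"
        using qpoch_nz[OF _ nc'] qpoch_nz[OF _ nb'] qpoch_inf_nz[OF nQ nc'] qpoch_inf_nz[OF nQ nb'] nQ by auto
      show ?thesis
        unfolding x_def unfolding cx qpoch_inf_shift'[OF nQ nb'] qpoch_inf_shift'[OF nQ nc'] R_def
        using nz by (simp add: field_simps)
    qed
    then have "(\<Sum>k\<le>min m n. R k * (qpoch_inf (c / b * x k) Q / qpoch_inf (x k) Q))
        = (\<Sum>k\<le>min m n. T k * qpoch (b * Q) Q (m + n - k) * (z1 ^ (m - k) * z2 ^ (n - k)) / qpoch_inf (b * Q) Q)"
      by simp
    also have "\<dots> = qp z1 z2 b Q m n / qpoch_inf (b * Q) Q"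
      unfolding qp_def T_def sum_divide_distrib by (simp add: mult_ac)
    finally show ?thesis .
  qed
  show ?thesis
    unfolding Q_def[symmetric] termeq val[symmetric] by (rule ser)
qed

lemma part_iiia:
  fixes q :: real and b z1 z2 :: complex and m n :: nat
  assumes q: "0 < q" "q < 1" and nb: "norm (b * of_real q) < 1"
  shows "(\<lambda>j. (b * of_real (q powr (real (m + n) / 2 + 1))) ^ j / qpoch (of_real q) (of_real q) j
          * qH (z1 * of_real (q powr (real j / 2))) (z2 * of_real (q powr (real j / 2))) (of_real q) m n)
      sums (qp z1 z2 b (of_real q) m n / qpoch_inf (b * of_real q) (of_real q))"
proof -
  define Q where "Q = complex_of_real q"
  have nQ: "norm Q < 1" using q by (simp add: Q_def)
  have nb': "norm (b * Q) < 1" using nb by (simp_all add: Q_def)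
  define T where "T k = qbinom Q m k * qbinom Q n k * (-1) ^ k * Q ^ (k choose 2) * qpoch Q Q k" for k
  define R where "R k = T k * (z1 ^ (m - k) * z2 ^ (n - k))" for k
  define x where "x k = b * Q * Q ^ (m + n - k)" for k
  have nx: "norm (x k) < 1" for k unfolding x_def by (rule nx_lt1[OF nQ nb'])
  have termeq: "(b * of_real (q powr (real (m + n) / 2 + 1))) ^ j / qpoch Q Q j
          * qH (z1 * of_real (q powr (real j / 2))) (z2 * of_real (q powr (real j / 2))) Q m n
        = (\<Sum>k\<le>min m n. R k * (x k ^ j / qpoch Q Q j))" for j
  proof -
    have "(b * of_real (q powr (real (m + n) / 2 + 1))) ^ j / qpoch Q Q j
          * qH (z1 * of_real (q powr (real j / 2))) (z2 * of_real (q powr (real j / 2))) Q m n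
        = (\<Sum>k\<le>min m n. (b * of_real (q powr (real (m + n) / 2 + 1))) ^ j / qpoch Q Q j
          * (T k * (z1 * of_real (q powr (real j / 2))) ^ (m - k)
               * (z2 * of_real (q powr (real j / 2))) ^ (n - k)))"
      unfolding qH_def T_def by (simp add: sum_distrib_left)
    also have "\<dots> = (\<Sum>k\<le>min m n. R k * (x k ^ j / qpoch Q Q j))"
    proof (rule sum.cong[OF refl])
      fix k assume "k \<in> {..min m n}"
      then have km: "k \<le> m" and kn: "k \<le> n" by auto
      have "(b * of_real (q powr (real (m + n) / 2 + 1))) ^ j / qpoch Q Q j
          * (T k * (z1 * of_real (q powr (real j / 2))) ^ (m - k)
               * (z2 * of_real (q powr (real j / 2))) ^ (n - k))
        = (T k / qpoch Q Q j)
          * ((b * of_real (q powr (real (m + n) / 2 + 1))) ^ j *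
          ((z1 * of_real (q powr (real j / 2))) ^ (m - k) * (z2 * of_real (q powr (real j / 2))) ^ (n - k)))"
        by (rule rr3)
      also have "\<dots> = (T k / qpoch Q Q j)
          * ((b * of_real q * of_real q ^ (m + n - k)) ^ j * (z1 ^ (m - k) * z2 ^ (n - k)))"
        by (simp only: powlem[OF q(1) km kn])
      also have "\<dots> = R k * (x k ^ j / qpoch Q Q j)"
        unfolding R_def x_def Q_def by (rule rr4)
      finally show "(b * of_real (q powr (real (m + n) / 2 + 1))) ^ j / qpoch Q Q j
          * (T k * (z1 * of_real (q powr (real j / 2))) ^ (m - k)
               * (z2 * of_real (q powr (real j / 2))) ^ (n - k))
          = R k * (x k ^ j / qpoch Q Q j)" .
    qed
    finally show ?thesis .
  qed
  have ser: "(\<lambda>j. \<Sum>k\<le>min m n. R k * (x k ^ j / qpoch Q Q j))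
      sums (\<Sum>k\<le>min m n. R k * (1 / qpoch_inf (x k) Q))"
    by (intro sums_sum sums_mult euler1 nQ nx)
  have val: "(\<Sum>k\<le>min m n. R k * (1 / qpoch_inf (x k) Q))
      = qp z1 z2 b Q m n / qpoch_inf (b * Q) Q"
  proof -
    have "R k * (1 / qpoch_inf (x k) Q)
        = T k * qpoch (b * Q) Q (m + n - k) * (z1 ^ (m - k) * z2 ^ (n - k)) / qpoch_inf (b * Q) Q" for k
    proof -
      have nz: "qpoch (b * Q) Q (m + n - k) \<noteq> 0" "qpoch_inf (b * Q) Q \<noteq> 0"
        using qpoch_nz[OF _ nb'] qpoch_inf_nz[OF nQ nb'] nQ by auto
      show ?thesis
        unfolding x_def qpoch_inf_shift'[OF nQ nb'] R_def
        using nz by (simp add: field_simps)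
    qed
    then have "(\<Sum>k\<le>min m n. R k * (1 / qpoch_inf (x k) Q))
        = (\<Sum>k\<le>min m n. T k * qpoch (b * Q) Q (m + n - k) * (z1 ^ (m - k) * z2 ^ (n - k)) / qpoch_inf (b * Q) Q)"
      by simp
    also have "\<dots> = qp z1 z2 b Q m n / qpoch_inf (b * Q) Q"
      unfolding qp_def T_def sum_divide_distrib by (simp add: mult_ac)
    finally show ?thesis .
  qed
  show ?thesis
    unfolding Q_def[symmetric] termeq val[symmetric] by (rule ser)
qed

lemma part_iiib:
  fixes q :: real and b z1 z2 :: complex and m n :: nat
  assumes q: "0 < q" "q < 1" and nb: "norm (b * of_real q) < 1"
  shows "(\<lambda>k. (- b * of_real (q powr (real (m + n) / 2 + 1))) ^ k / qpoch (of_real q) (of_real q) k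
          * of_real q ^ (k choose 2)
          * qp (z1 * of_real (q powr (real k / 2))) (z2 * of_real (q powr (real k / 2))) b (of_real q) m n)
      sums (qH z1 z2 (of_real q) m n * qpoch_inf (b * of_real q) (of_real q))"
proof -
  define Q where "Q = complex_of_real q"
  have nQ: "norm Q < 1" using q by (simp add: Q_def)
  have nb': "norm (b * Q) < 1" using nb by (simp_all add: Q_def)
  define T where "T k = qbinom Q m k * qbinom Q n k * (-1) ^ k * Q ^ (k choose 2) * qpoch Q Q k" for k
  define R where "R k = T k * qpoch (b * Q) Q (m + n - k) * (z1 ^ (m - k) * z2 ^ (n - k))" for k
  define x where "x k = b * Q * Q ^ (m + n - k)" for k
  have nx: "norm (x k) < 1" for k unfolding x_def by (rule nx_lt1[OF nQ nb'])
  have termeq: "(- b * of_real (q powr (real (m + n) / 2 + 1))) ^ s / qpoch Q Q s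
          * Q ^ (s choose 2)
          * qp (z1 * of_real (q powr (real s / 2))) (z2 * of_real (q powr (real s / 2))) b Q m n
        = (\<Sum>k\<le>min m n. R k * ((-1) ^ s * Q ^ (s choose 2) / qpoch Q Q s * x k ^ s))" for s
  proof -
    have neg: "(- b * of_real (q powr (real (m + n) / 2 + 1))) ^ s
        = (-1) ^ s * (b * of_real (q powr (real (m + n) / 2 + 1))) ^ s"
    proof -
      have "- b * of_real (q powr (real (m + n) / 2 + 1)) = (-1) * (b * of_real (q powr (real (m + n) / 2 + 1)))"
        by simp
      then show ?thesis by (simp only: power_mult_distrib)
    qed
    have "(- b * of_real (q powr (real (m + n) / 2 + 1))) ^ s / qpoch Q Q s
          * Q ^ (s choose 2)
          * qp (z1 * of_real (q powr (real s / 2))) (z2 * of_real (q powr (real s / 2))) b Q m n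
        = (\<Sum>k\<le>min m n. (-1) ^ s * (b * of_real (q powr (real (m + n) / 2 + 1))) ^ s / qpoch Q Q s
          * Q ^ (s choose 2)
          * (T k * qpoch (b * Q) Q (m + n - k) * (z1 * of_real (q powr (real s / 2))) ^ (m - k)
               * (z2 * of_real (q powr (real s / 2))) ^ (n - k)))"
      unfolding qp_def T_def neg by (simp add: sum_distrib_left)
    also have "\<dots> = (\<Sum>k\<le>min m n. R k * ((-1) ^ s * Q ^ (s choose 2) / qpoch Q Q s * x k ^ s))"
    proof (rule sum.cong[OF refl])
      fix k assume "k \<in> {..min m n}"
      then have km: "k \<le> m" and kn: "k \<le> n" by auto
      have "(-1) ^ s * (b * of_real (q powr (real (m + n) / 2 + 1))) ^ s / qpoch Q Q s
          * Q ^ (s choose 2)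
          * (T k * qpoch (b * Q) Q (m + n - k) * (z1 * of_real (q powr (real s / 2))) ^ (m - k)
               * (z2 * of_real (q powr (real s / 2))) ^ (n - k))
        = ((-1) ^ s / qpoch Q Q s * Q ^ (s choose 2) * T k * qpoch (b * Q) Q (m + n - k))
          * ((b * of_real (q powr (real (m + n) / 2 + 1))) ^ s *
          ((z1 * of_real (q powr (real s / 2))) ^ (m - k) * (z2 * of_real (q powr (real s / 2))) ^ (n - k)))"
        by (rule rr5)
      also have "\<dots> = ((-1) ^ s / qpoch Q Q s * Q ^ (s choose 2) * T k * qpoch (b * Q) Q (m + n - k))
          * ((b * of_real q * of_real q ^ (m + n - k)) ^ s * (z1 ^ (m - k) * z2 ^ (n - k)))"
        by (simp only: powlem[OF q(1) km kn])
      also have "\<dots> = R k * ((-1) ^ s * Q ^ (s choose 2) / qpoch Q Q s * x k ^ s)"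
        unfolding R_def x_def Q_def by (rule rr6)
      finally show "(-1) ^ s * (b * of_real (q powr (real (m + n) / 2 + 1))) ^ s / qpoch Q Q s
          * Q ^ (s choose 2)
          * (T k * qpoch (b * Q) Q (m + n - k) * (z1 * of_real (q powr (real s / 2))) ^ (m - k)
               * (z2 * of_real (q powr (real s / 2))) ^ (n - k))
          = R k * ((-1) ^ s * Q ^ (s choose 2) / qpoch Q Q s * x k ^ s)" .
    qed
    finally show ?thesis .
  qed
  have ser: "(\<lambda>s. \<Sum>k\<le>min m n. R k * ((-1) ^ s * Q ^ (s choose 2) / qpoch Q Q s * x k ^ s))
      sums (\<Sum>k\<le>min m n. R k * qpoch_inf (x k) Q)"
    by (intro sums_sum sums_mult euler2 nQ nx)
  have val: "(\<Sum>k\<le>min m n. R k * qpoch_inf (x k) Q) = qH z1 z2 Q m n * qpoch_inf (b * Q) Q"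
  proof -
    have "R k * qpoch_inf (x k) Q
        = T k * (z1 ^ (m - k) * z2 ^ (n - k)) * qpoch_inf (b * Q) Q" for k
    proof -
      have nz: "qpoch (b * Q) Q (m + n - k) \<noteq> 0"
        using qpoch_nz[OF _ nb'] nQ by auto
      show ?thesis
        unfolding x_def qpoch_inf_shift'[OF nQ nb'] R_def
        using nz by (simp add: field_simps)
    qed
    then have "(\<Sum>k\<le>min m n. R k * qpoch_inf (x k) Q)
        = (\<Sum>k\<le>min m n. T k * (z1 ^ (m - k) * z2 ^ (n - k)) * qpoch_inf (b * Q) Q)"
      by simp
    also have "\<dots> = qH z1 z2 Q m n * qpoch_inf (b * Q) Q"
      unfolding qH_def T_def sum_distrib_right by (simp add: mult_ac)
    finally show ?thesis .
  qed
  show ?thesis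
    unfolding Q_def[symmetric] termeq val[symmetric] by (rule ser)
qed



lemma has_sum_prod_fs:
  fixes f :: "'a \<Rightarrow> complex" and g :: "'b \<Rightarrow> complex"
  assumes f: "(f has_sum S) A" and g: "(g has_sum T) B"
  shows "((\<lambda>p. f (fst p) * g (snd p)) has_sum (S * T)) (A \<times> B)"
    and "(\<lambda>p. norm (f (fst p) * g (snd p))) summable_on (A \<times> B)"
proof -
  have fa: "(\<lambda>x. norm (f x)) summable_on A"
    using has_sum_imp_summable[OF f] summable_on_iff_abs_summable_on_complex by blast
  have ga: "(\<lambda>x. norm (g x)) summable_on B"
    using has_sum_imp_summable[OF g] summable_on_iff_abs_summable_on_complex by blast
  have abs: "(\<lambda>p. norm (f (fst p) * g (snd p))) summable_on (A \<times> B)"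
  proof (rule Infinite_Sum.abs_summable_on_Sigma_iff[where f="\<lambda>p. f (fst p) * g (snd p)", THEN iffD2], intro conjI ballI)
    fix x assume "x \<in> A"
    show "(\<lambda>y. norm (f (fst (x, y)) * g (snd (x, y)))) summable_on B"
      using summable_on_cmult_right[OF ga, of "norm (f x)"] by (simp add: norm_mult)
  next
    have e: "(\<lambda>x. \<Sum>\<^sub>\<infinity>y\<in>B. norm (f (fst (x, y)) * g (snd (x, y)))) = (\<lambda>x. norm (f x) * (\<Sum>\<^sub>\<infinity>y\<in>B. norm (g y)))"
      by (simp add: norm_mult infsum_cmult_right')
    have "(\<lambda>x. norm (f x) * norm (\<Sum>\<^sub>\<infinity>y\<in>B. norm (g y))) summable_on A"
      by (rule summable_on_cmult_left[OF fa])
    then show "(\<lambda>x. norm (\<Sum>\<^sub>\<infinity>y\<in>B. norm (f (fst (x, y)) * g (snd (x, y))))) summable_on A"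
      by (simp add: norm_mult infsum_cmult_right' abs_mult)
  qed
  then show "(\<lambda>p. norm (f (fst p) * g (snd p))) summable_on (A \<times> B)" .
  have sm: "(\<lambda>p. f (fst p) * g (snd p)) summable_on (A \<times> B)"
    using abs summable_on_iff_abs_summable_on_complex by blast
  show "((\<lambda>p. f (fst p) * g (snd p)) has_sum (S * T)) (A \<times> B)"
  proof (rule has_sum_SigmaI[where g="\<lambda>x. f x * T"])
    fix x assume "x \<in> A"
    show "((\<lambda>y. f (fst (x, y)) * g (snd (x, y))) has_sum f x * T) B"
      using has_sum_cmult_right[OF g, of "f x"] by simp
  next
    show "((\<lambda>x. f x * T) has_sum S * T) A" by (rule has_sum_cmult_left[OF f])
  next
    show "(\<lambda>p. f (fst p) * g (snd p)) summable_on Sigma A (\<lambda>_. B)" using sm by simp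
  qed
qed

lemma norm_mult_pow_lt1:
  fixes y Q :: complex
  assumes "norm Q < 1" "norm y < 1"
  shows "norm (y * Q ^ j) < 1"
proof -
  have "norm (Q ^ j) \<le> 1" using assms by (simp add: norm_power power_le_one)
  then have "norm (Q ^ j * y) < 1" using assms by (intro norm_mult_lt1)
  then show ?thesis by (simp add: mult.commute)
qed

lemma euler1_has_sum:
  fixes Q x :: complex
  assumes "norm Q < 1" "norm x < 1"
  shows "((\<lambda>j. x ^ j / qpoch Q Q j) has_sum (1 / qpoch_inf x Q)) UNIV"
  by (rule norm_summable_imp_has_sum[OF euler1(2)[OF assms] euler1(1)[OF assms]])

lemma euler2_has_sum:
  fixes Q x :: complex
  assumes "norm Q < 1" "norm x < 1"
  shows "((\<lambda>j. (-1) ^ j * Q ^ (j choose 2) / qpoch Q Q j * x ^ j) has_sum qpoch_inf x Q) UNIV"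
  by (rule norm_summable_imp_has_sum[OF euler2(2)[OF assms] euler2(1)[OF assms]])

lemma alg_coef:
  fixes qm qn qk qa qc E F P Z1 Z2 uk ua vk vc :: complex
  assumes "qm \<noteq> 0" "qn \<noteq> 0" "qk \<noteq> 0" "qa \<noteq> 0" "qc \<noteq> 0"
  shows "qm / (qk * qa) * (qn / (qk * qc)) * E * F * qk * P * Z1 * Z2 / (qm * qn) * (uk * ua) * (vk * vc)
       = E * F / qk * (uk * vk) * (ua * Z1 / qa * (vc * Z2 / qc)) * P"
  using assms by (simp add: field_simps)



lemma alg2:
  fixes A B W P X C Y D :: complex
  shows "A / B * (W * P) ^ k * ((X * P) ^ a / C * ((Y * P) ^ c / D))
     = A / B * W ^ k * (X ^ a / C * (Y ^ c / D)) * P ^ (k + a + c)"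
  by (simp add: power_mult_distrib power_add divide_inverse mult_ac)

lemma alg3:
  fixes B C H P :: complex
  shows "B ^ j / C * (H * (P ^ j) ^ s) = H * ((B * P ^ s) ^ j / C)"
proof -
  have "(P ^ j) ^ s = (P ^ s) ^ j" by (simp add: power_mult[symmetric] mult.commute)
  then show ?thesis by (simp add: power_mult_distrib divide_inverse mult_ac)
qed

lemma part_i_core:
  fixes Q b X Y W u v z1 z2 :: complex
  assumes nQ: "norm Q < 1" and nb: "norm (b * Q) < 1"
    and nX: "norm X < 1" and nY: "norm Y < 1" and nW: "norm W < 1"
    and Xd: "X = u * z1" and Yd: "Y = v * z2" and Wd: "W = u * v"
  defines "f \<equiv> (\<lambda>j. (b * Q) ^ j / qpoch Q Q j * qpoch_inf (W * Q ^ j) Q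
                 / (qpoch_inf (X * Q ^ j) Q * qpoch_inf (Y * Q ^ j) Q))"
  shows "((\<lambda>(m, n). qp z1 z2 b Q m n / (qpoch Q Q m * qpoch Q Q n) * u ^ m * v ^ n)
           has_sum (qpoch_inf (b * Q) Q * suminf f)) UNIV"
    and "summable f"
proof -
  have nQ': "norm Q \<le> 1" using nQ by simp
  define ee where "ee k y = (-1) ^ k * Q ^ (k choose 2) / qpoch Q Q k * y ^ k" for k y
  define ii where "ii a y = y ^ a / qpoch Q Q a" for a y
  define H where "H j t = ee (fst t) (W * Q ^ j) * (ii (fst (snd t)) (X * Q ^ j) * ii (snd (snd t)) (Y * Q ^ j))"
    for j and t :: "nat \<times> nat \<times> nat"
  define H0 where "H0 t = ee (fst t) W * (ii (fst (snd t)) X * ii (snd (snd t)) Y)" for t :: "nat \<times> nat \<times> nat"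
  define V where "V j = qpoch_inf (W * Q ^ j) Q * (1 / qpoch_inf (X * Q ^ j) Q * (1 / qpoch_inf (Y * Q ^ j) Q))" for j
  define Bj where "Bj j = (b * Q) ^ j / qpoch Q Q j" for j
  define sm where "sm t = fst t + fst (snd t) + snd (snd t)" for t :: "nat \<times> nat \<times> nat"
  define D where "D = qpoch_inf (b * Q) Q"
  have Dnz: "D \<noteq> 0" unfolding D_def by (rule qpoch_inf_nz[OF nQ nb])

  have Hsum: "(H j has_sum V j) UNIV" for j
  proof -
    have e1: "((\<lambda>k. ee k (W * Q ^ j)) has_sum qpoch_inf (W * Q ^ j) Q) UNIV"
      unfolding ee_def by (rule euler2_has_sum[OF nQ norm_mult_pow_lt1[OF nQ nW]])
    have e2: "((\<lambda>a. ii a (X * Q ^ j)) has_sum 1 / qpoch_inf (X * Q ^ j) Q) UNIV"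
      unfolding ii_def by (rule euler1_has_sum[OF nQ norm_mult_pow_lt1[OF nQ nX]])
    have e3: "((\<lambda>a. ii a (Y * Q ^ j)) has_sum 1 / qpoch_inf (Y * Q ^ j) Q) UNIV"
      unfolding ii_def by (rule euler1_has_sum[OF nQ norm_mult_pow_lt1[OF nQ nY]])
    have e23: "((\<lambda>p. ii (fst p) (X * Q ^ j) * ii (snd p) (Y * Q ^ j)) has_sum
        (1 / qpoch_inf (X * Q ^ j) Q * (1 / qpoch_inf (Y * Q ^ j) Q))) UNIV"
      using has_sum_prod_fs(1)[OF e2 e3] by simp
    show ?thesis
      using has_sum_prod_fs(1)[OF e1 e23] by (simp add: H_def[abs_def] V_def)
  qed
  have Hrel: "H j t = H0 t * (Q ^ j) ^ sm t" for j t
    unfolding H_def H0_def ee_def ii_def sm_def by (rule alg2)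
  have H00: "H 0 = H0" by (rule ext) (simp add: Hrel)
  have H0sum: "(H0 has_sum V 0) UNIV" using Hsum[of 0] H00 by simp
  have Bsum: "(Bj has_sum 1 / D) UNIV"
    unfolding Bj_def D_def by (rule euler1_has_sum[OF nQ nb])
  have Hle: "norm (H j t) \<le> norm (H0 t)" for j t
  proof -
    have "norm ((Q ^ j) ^ sm t) \<le> 1" using nQ' by (simp add: norm_power power_le_one)
    then have "norm (H0 t) * norm ((Q ^ j) ^ sm t) \<le> norm (H0 t)"
      by (intro mult_left_le) auto
    then show ?thesis by (simp add: Hrel norm_mult)
  qed

  define w where "w p = Bj (fst p) * H (fst p) (snd p)" for p :: "nat \<times> (nat \<times> nat \<times> nat)"
  have prodabs: "(\<lambda>p. norm (Bj (fst p) * H0 (snd p))) summable_on (UNIV \<times> UNIV)"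
    by (rule has_sum_prod_fs(2)[OF Bsum H0sum])
  have wabs: "(\<lambda>p. norm (w p)) summable_on (UNIV \<times> UNIV)"
  proof (rule Infinite_Sum.abs_summable_on_comparison_test'[OF prodabs])
    fix p :: "nat \<times> (nat \<times> nat \<times> nat)"
    show "norm (w p) \<le> norm (Bj (fst p) * H0 (snd p))"
      unfolding w_def norm_mult by (intro mult_left_mono Hle) auto
  qed
  have wsum: "w summable_on (UNIV \<times> UNIV)"
    using wabs summable_on_iff_abs_summable_on_complex by blast
  define Tot where "Tot = infsum w (UNIV \<times> UNIV)"
  have wh: "(w has_sum Tot) (UNIV \<times> UNIV)" using wsum unfolding Tot_def by (rule has_sum_infsum)
  have S1: "((\<lambda>j. Bj j * V j) has_sum Tot) UNIV"
  proof (rule has_sum_Sigma'[OF wh])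
    fix j :: nat assume "j \<in> UNIV"
    show "((\<lambda>t. w (j, t)) has_sum Bj j * V j) UNIV"
      unfolding w_def using has_sum_cmult_right[OF Hsum[of j], of "Bj j"] by simp
  qed
  have fe: "f j = Bj j * V j" for j
    unfolding f_def Bj_def V_def by (simp add: divide_inverse mult_ac)
  have fsums: "f sums Tot"
  proof -
    have "f = (\<lambda>j. Bj j * V j)" using fe by (intro ext) simp
    then show ?thesis using has_sum_imp_sums[OF S1] by simp
  qed
  then show "summable f" by (rule sums_summable)
  have fTot: "suminf f = Tot" using fsums by (rule sums_unique[symmetric])

  have wh2: "((\<lambda>(x, y). w (y, x)) has_sum Tot) (UNIV \<times> UNIV)"
    using wh has_sum_swap by blast
  have S2: "((\<lambda>t. H0 t * (1 / qpoch_inf (b * Q * Q ^ sm t) Q)) has_sum Tot) UNIV"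
  proof (rule has_sum_Sigma'[OF wh2])
    fix t :: "nat \<times> nat \<times> nat" assume "t \<in> UNIV"
    have e: "w (j, t) = H0 t * ((b * Q * Q ^ sm t) ^ j / qpoch Q Q j)" for j
      unfolding w_def Bj_def by (simp only: fst_conv snd_conv Hrel alg3)
    have "((\<lambda>j. (b * Q * Q ^ sm t) ^ j / qpoch Q Q j) has_sum 1 / qpoch_inf (b * Q * Q ^ sm t) Q) UNIV"
      by (rule euler1_has_sum[OF nQ nx_lt1[OF nQ nb]])
    from has_sum_cmult_right[OF this, of "H0 t"]
    show "((\<lambda>y. (\<lambda>(x, y). w (y, x)) (t, y)) has_sum H0 t * (1 / qpoch_inf (b * Q * Q ^ sm t) Q)) UNIV"
      by (simp add: e)
  qed
  define h where "h t = H0 t * qpoch (b * Q) Q (sm t)" for t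
  have S3: "(h has_sum Tot * D) UNIV"
  proof -
    have "((\<lambda>t. H0 t * (1 / qpoch_inf (b * Q * Q ^ sm t) Q) * D) has_sum Tot * D) UNIV"
      by (rule has_sum_cmult_left[OF S2])
    moreover have "H0 t * (1 / qpoch_inf (b * Q * Q ^ sm t) Q) * D = h t" for t
    proof -
      have "qpoch (b * Q) Q (sm t) \<noteq> 0" using qpoch_nz[OF nQ' nb] by simp
      then show ?thesis
        unfolding h_def qpoch_inf_shift'[OF nQ nb] D_def[symmetric] using Dnz by (simp add: field_simps)
    qed
    ultimately show ?thesis by simp
  qed
  define SS where "SS = Sigma (UNIV :: (nat \<times> nat) set) (\<lambda>mn. {..min (fst mn) (snd mn)})"
  define G where "G p = h (snd p, fst (fst p) - snd p, snd (fst p) - snd p)" for p :: "(nat \<times> nat) \<times> nat"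
  have S4: "(G has_sum Tot * D) SS"
  proof -
    have "(G has_sum Tot * D) SS = (h has_sum Tot * D) UNIV"
      by (rule has_sum_reindex_bij_witness[where i="\<lambda>t. ((fst t + fst (snd t), fst t + snd (snd t)), fst t)"
            and j="\<lambda>p. (snd p, fst (fst p) - snd p, snd (fst p) - snd p)"])
        (auto simp: SS_def G_def)
    then show ?thesis using S3 by simp
  qed
  have S5: "((\<lambda>mn. \<Sum>k\<in>{..min (fst mn) (snd mn)}. G (mn, k)) has_sum Tot * D) UNIV"
  proof (rule has_sum_Sigma'[OF S4[unfolded SS_def]])
    fix mn :: "nat \<times> nat" assume "mn \<in> UNIV"
    show "((\<lambda>k. G (mn, k)) has_sum (\<Sum>k\<in>{..min (fst mn) (snd mn)}. G (mn, k))) {..min (fst mn) (snd mn)}"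
      by (rule has_sum_finite) simp
  qed
  have pt: "qp z1 z2 b Q m n / (qpoch Q Q m * qpoch Q Q n) * u ^ m * v ^ n
      = (\<Sum>k\<in>{..min m n}. G ((m, n), k))" for m n
  proof -
    have "qp z1 z2 b Q m n / (qpoch Q Q m * qpoch Q Q n) * u ^ m * v ^ n
      = (\<Sum>k\<le>min m n. qbinom Q m k * qbinom Q n k * (-1) ^ k
      * Q ^ (k choose 2) * qpoch Q Q k * qpoch (b * Q) Q (m + n - k)
      * z1 ^ (m - k) * z2 ^ (n - k) / (qpoch Q Q m * qpoch Q Q n) * u ^ m * v ^ n)"
      unfolding qp_def by (simp add: sum_divide_distrib sum_distrib_right)
    also have "\<dots> = (\<Sum>k\<in>{..min m n}. G ((m, n), k))"
    proof (rule sum.cong[OF refl])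
      fix k assume "k \<in> {..min m n}"
      then have km: "k \<le> m" and kn: "k \<le> n" by auto
      have um: "u ^ m = u ^ k * u ^ (m - k)" using km by (metis le_add_diff_inverse power_add)
      have vn: "v ^ n = v ^ k * v ^ (n - k)" using kn by (metis le_add_diff_inverse power_add)
      have smk: "sm (k, m - k, n - k) = m + n - k" unfolding sm_def using km kn by simp
      have nz: "qpoch Q Q i \<noteq> 0" for i using qpoch_nz[OF nQ' nQ] .
      have "G ((m, n), k) = (-1) ^ k * Q ^ (k choose 2) / qpoch Q Q k * (u ^ k * v ^ k)
          * ((u ^ (m - k) * z1 ^ (m - k)) / qpoch Q Q (m - k) * ((v ^ (n - k) * z2 ^ (n - k)) / qpoch Q Q (n - k)))
          * qpoch (b * Q) Q (m + n - k)"
        unfolding G_def h_def H0_def ee_def ii_def Xd Yd Wd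
        by (simp only: fst_conv snd_conv smk power_mult_distrib)
      also have "\<dots> = qbinom Q m k * qbinom Q n k * (-1) ^ k
          * Q ^ (k choose 2) * qpoch Q Q k * qpoch (b * Q) Q (m + n - k)
          * z1 ^ (m - k) * z2 ^ (n - k) / (qpoch Q Q m * qpoch Q Q n) * u ^ m * v ^ n"
        unfolding qbinom_def um vn by (rule alg_coef[symmetric]) (use nz in auto)
      finally show "qbinom Q m k * qbinom Q n k * (-1) ^ k
          * Q ^ (k choose 2) * qpoch Q Q k * qpoch (b * Q) Q (m + n - k)
          * z1 ^ (m - k) * z2 ^ (n - k) / (qpoch Q Q m * qpoch Q Q n) * u ^ m * v ^ n = G ((m, n), k)"
        by simp
    qed
    finally show ?thesis .
  qed
  have "((\<lambda>(m, n). qp z1 z2 b Q m n / (qpoch Q Q m * qpoch Q Q n) * u ^ m * v ^ n) has_sum Tot * D) UNIV"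
  proof (rule has_sum_cong[THEN iffD1, OF _ S5])
    fix x :: "nat \<times> nat" assume "x \<in> UNIV"
    obtain m n where x: "x = (m, n)" by (cases x)
    show "(\<Sum>k\<in>{..min (fst x) (snd x)}. G (x, k))
        = (\<lambda>(m, n). qp z1 z2 b Q m n / (qpoch Q Q m * qpoch Q Q n) * u ^ m * v ^ n) x"
      unfolding x by (simp only: prod.case fst_conv snd_conv pt)
  qed
  then show "((\<lambda>(m, n). qp z1 z2 b Q m n / (qpoch Q Q m * qpoch Q Q n) * u ^ m * v ^ n)
           has_sum (qpoch_inf (b * Q) Q * suminf f)) UNIV"
    by (simp add: fTot D_def mult.commute)
qed



lemma part_i_rest:
  fixes Q b X Y W :: complex
  assumes nQ: "norm Q < 1" and nb: "norm (b * Q) < 1"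
    and nX: "norm X < 1" and nY: "norm Y < 1" and nW: "norm W < 1"
    and fs: "summable (\<lambda>j. (b * Q) ^ j / qpoch Q Q j * qpoch_inf (W * Q ^ j) Q
                 / (qpoch_inf (X * Q ^ j) Q * qpoch_inf (Y * Q ^ j) Q))"
  shows "summable (\<lambda>j. qpoch X Q j * qpoch Y Q j / (qpoch Q Q j * qpoch W Q j) * (b * Q) ^ j)"
    and "qpoch_inf (b * Q) Q * (\<Sum>j. (b * Q) ^ j / qpoch Q Q j * qpoch_inf (W * Q ^ j) Q
                 / (qpoch_inf (X * Q ^ j) Q * qpoch_inf (Y * Q ^ j) Q))
       = qpoch_inf (b * Q) Q * qpoch_inf W Q / (qpoch_inf X Q * qpoch_inf Y Q)
         * (\<Sum>j. qpoch X Q j * qpoch Y Q j / (qpoch Q Q j * qpoch W Q j) * (b * Q) ^ j)"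
proof -
  have nQ': "norm Q \<le> 1" using nQ by simp
  define f where "f j = (b * Q) ^ j / qpoch Q Q j * qpoch_inf (W * Q ^ j) Q
                 / (qpoch_inf (X * Q ^ j) Q * qpoch_inf (Y * Q ^ j) Q)" for j
  define g where "g j = qpoch X Q j * qpoch Y Q j / (qpoch Q Q j * qpoch W Q j) * (b * Q) ^ j" for j
  define K where "K = qpoch_inf W Q / (qpoch_inf X Q * qpoch_inf Y Q)"
  have nz: "qpoch_inf W Q \<noteq> 0" "qpoch_inf X Q \<noteq> 0" "qpoch_inf Y Q \<noteq> 0"
    using qpoch_inf_nz[OF nQ nW] qpoch_inf_nz[OF nQ nX] qpoch_inf_nz[OF nQ nY] by auto
  then have Knz: "K \<noteq> 0" by (simp add: K_def)
  have fg: "f j = K * g j" for j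
  proof -
    have nz2: "qpoch W Q j \<noteq> 0" "qpoch X Q j \<noteq> 0" "qpoch Y Q j \<noteq> 0" "qpoch Q Q j \<noteq> 0"
      using qpoch_nz[OF nQ' nW] qpoch_nz[OF nQ' nX] qpoch_nz[OF nQ' nY] qpoch_nz[OF nQ' nQ] by auto
    show ?thesis
      unfolding f_def g_def K_def
        qpoch_inf_shift[OF nQ nz2(1)] qpoch_inf_shift[OF nQ nz2(2)] qpoch_inf_shift[OF nQ nz2(3)]
      using nz nz2 by (simp add: field_simps)
  qed
  have fs': "summable f" using fs unfolding f_def .
  have "summable (\<lambda>j. f j / K)" using fs' by (rule summable_divide)
  moreover have "(\<lambda>j. f j / K) = g" using Knz by (intro ext) (simp add: fg)
  ultimately have gs: "summable g" by simp
  then show "summable (\<lambda>j. qpoch X Q j * qpoch Y Q j / (qpoch Q Q j * qpoch W Q j) * (b * Q) ^ j)"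
    unfolding g_def .
  have "suminf f = K * suminf g"
    unfolding fg[abs_def] by (rule suminf_mult[OF gs])
  then show "qpoch_inf (b * Q) Q * (\<Sum>j. (b * Q) ^ j / qpoch Q Q j * qpoch_inf (W * Q ^ j) Q
                 / (qpoch_inf (X * Q ^ j) Q * qpoch_inf (Y * Q ^ j) Q))
       = qpoch_inf (b * Q) Q * qpoch_inf W Q / (qpoch_inf X Q * qpoch_inf Y Q)
         * (\<Sum>j. qpoch X Q j * qpoch Y Q j / (qpoch Q Q j * qpoch W Q j) * (b * Q) ^ j)"
    unfolding f_def[abs_def, symmetric] g_def[abs_def, symmetric] K_def by simp
qed

lemma part_i_full:
  fixes q :: real and b z1 z2 u v :: complex
  assumes q: "0 < q" "q < 1" and nb: "norm (b * of_real q) < 1"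
    and h1: "norm (u * z1) < 1" and h2: "norm (v * z2) < 1" and h3: "norm (u * v) < 1"
  shows "((\<lambda>(m, n). qp z1 z2 b (of_real q) m n / (qpoch (of_real q) (of_real q) m * qpoch (of_real q) (of_real q) n)
            * u ^ m * v ^ n)
        has_sum
        (qpoch_inf (b * of_real q) (of_real q) *
           (\<Sum>j. (b * of_real q) ^ j / qpoch (of_real q) (of_real q) j
              * qpoch_inf (u * v * of_real q ^ j) (of_real q)
              / (qpoch_inf (u * z1 * of_real q ^ j) (of_real q) * qpoch_inf (v * z2 * of_real q ^ j) (of_real q))))) UNIV
      \<and> summable (\<lambda>j. (b * of_real q) ^ j / qpoch (of_real q) (of_real q) j
              * qpoch_inf (u * v * of_real q ^ j) (of_real q)
              / (qpoch_inf (u * z1 * of_real q ^ j) (of_real q) * qpoch_inf (v * z2 * of_real q ^ j) (of_real q)))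
      \<and> summable (\<lambda>j. qpoch (u * z1) (of_real q) j * qpoch (v * z2) (of_real q) j
              / (qpoch (of_real q) (of_real q) j * qpoch (u * v) (of_real q) j) * (b * of_real q) ^ j)
      \<and> qpoch_inf (b * of_real q) (of_real q) *
           (\<Sum>j. (b * of_real q) ^ j / qpoch (of_real q) (of_real q) j
              * qpoch_inf (u * v * of_real q ^ j) (of_real q)
              / (qpoch_inf (u * z1 * of_real q ^ j) (of_real q) * qpoch_inf (v * z2 * of_real q ^ j) (of_real q)))
        = qpoch_inf (b * of_real q) (of_real q) * qpoch_inf (u * v) (of_real q)
            / (qpoch_inf (u * z1) (of_real q) * qpoch_inf (v * z2) (of_real q))
          * (\<Sum>j. qpoch (u * z1) (of_real q) j * qpoch (v * z2) (of_real q) j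
              / (qpoch (of_real q) (of_real q) j * qpoch (u * v) (of_real q) j) * (b * of_real q) ^ j)"
proof -
  have nQ: "norm (complex_of_real q) < 1" using q by simp
  note c = part_i_core[OF nQ nb h1 h2 h3 refl refl refl]
  note r = part_i_rest[OF nQ nb h1 h2 h3 c(2)]
  show ?thesis using c r by blast
qed

theorem theorem5p2:
  fixes q :: real and b z1 z2 :: complex and m n :: nat
  assumes "0 < q" and "q < 1" and "norm (b * of_real q) < 1"
  shows
   "(\<forall>u v :: complex. norm (u * z1) < 1 \<and> norm (v * z2) < 1 \<and> norm (u * v) < 1 \<longrightarrow>
      ((\<lambda>(m, n). qp z1 z2 b (of_real q) m n / (qpoch (of_real q) (of_real q) m * qpoch (of_real q) (of_real q) n)
            * u ^ m * v ^ n)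
        has_sum
        (qpoch_inf (b * of_real q) (of_real q) *
           (\<Sum>j. (b * of_real q) ^ j / qpoch (of_real q) (of_real q) j
              * qpoch_inf (u * v * of_real q ^ j) (of_real q)
              / (qpoch_inf (u * z1 * of_real q ^ j) (of_real q) * qpoch_inf (v * z2 * of_real q ^ j) (of_real q))))) UNIV
      \<and> summable (\<lambda>j. (b * of_real q) ^ j / qpoch (of_real q) (of_real q) j
              * qpoch_inf (u * v * of_real q ^ j) (of_real q)
              / (qpoch_inf (u * z1 * of_real q ^ j) (of_real q) * qpoch_inf (v * z2 * of_real q ^ j) (of_real q)))
      \<and> summable (\<lambda>j. qpoch (u * z1) (of_real q) j * qpoch (v * z2) (of_real q) j
              / (qpoch (of_real q) (of_real q) j * qpoch (u * v) (of_real q) j) * (b * of_real q) ^ j)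
      \<and> qpoch_inf (b * of_real q) (of_real q) *
           (\<Sum>j. (b * of_real q) ^ j / qpoch (of_real q) (of_real q) j
              * qpoch_inf (u * v * of_real q ^ j) (of_real q)
              / (qpoch_inf (u * z1 * of_real q ^ j) (of_real q) * qpoch_inf (v * z2 * of_real q ^ j) (of_real q)))
        = qpoch_inf (b * of_real q) (of_real q) * qpoch_inf (u * v) (of_real q)
            / (qpoch_inf (u * z1) (of_real q) * qpoch_inf (v * z2) (of_real q))
          * (\<Sum>j. qpoch (u * z1) (of_real q) j * qpoch (v * z2) (of_real q) j
              / (qpoch (of_real q) (of_real q) j * qpoch (u * v) (of_real q) j) * (b * of_real q) ^ j))
  \<and> (\<forall>c :: complex. norm (c * of_real q) < 1 \<and> b \<noteq> 0 \<longrightarrow>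
      (\<lambda>j. qpoch (c / b) (of_real q) j / qpoch (of_real q) (of_real q) j
          * (b * of_real (q powr (real (m + n) / 2 + 1))) ^ j
          * (qp (z1 * of_real (q powr (real j / 2))) (z2 * of_real (q powr (real j / 2))) c (of_real q) m n
             / qpoch_inf (c * of_real q) (of_real q)))
      sums (qp z1 z2 b (of_real q) m n / qpoch_inf (b * of_real q) (of_real q)))
  \<and> (\<lambda>j. (b * of_real (q powr (real (m + n) / 2 + 1))) ^ j / qpoch (of_real q) (of_real q) j
          * qH (z1 * of_real (q powr (real j / 2))) (z2 * of_real (q powr (real j / 2))) (of_real q) m n)
      sums (qp z1 z2 b (of_real q) m n / qpoch_inf (b * of_real q) (of_real q))
  \<and> summable (\<lambda>k. (- b * of_real (q powr (real (m + n) / 2 + 1))) ^ k / qpoch (of_real q) (of_real q) k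
          * of_real q ^ (k choose 2)
          * qp (z1 * of_real (q powr (real k / 2))) (z2 * of_real (q powr (real k / 2))) b (of_real q) m n)
  \<and> qH z1 z2 (of_real q) m n = 1 / qpoch_inf (b * of_real q) (of_real q) *
      (\<Sum>k. (- b * of_real (q powr (real (m + n) / 2 + 1))) ^ k / qpoch (of_real q) (of_real q) k
          * of_real q ^ (k choose 2)
          * qp (z1 * of_real (q powr (real k / 2))) (z2 * of_real (q powr (real k / 2))) b (of_real q) m n)"
proof -
  have nQ: "norm (complex_of_real q) < 1" using assms(1,2) by simp
  have nb: "norm (b * complex_of_real q) < 1" using assms(3) .
  have P1: "\<forall>u v :: complex. norm (u * z1) < 1 \<and> norm (v * z2) < 1 \<and> norm (u * v) < 1 \<longrightarrow>
      ((\<lambda>(m, n). qp z1 z2 b (of_real q) m n / (qpoch (of_real q) (of_real q) m * qpoch (of_real q) (of_real q) n)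
            * u ^ m * v ^ n)
        has_sum
        (qpoch_inf (b * of_real q) (of_real q) *
           (\<Sum>j. (b * of_real q) ^ j / qpoch (of_real q) (of_real q) j
              * qpoch_inf (u * v * of_real q ^ j) (of_real q)
              / (qpoch_inf (u * z1 * of_real q ^ j) (of_real q) * qpoch_inf (v * z2 * of_real q ^ j) (of_real q))))) UNIV
      \<and> summable (\<lambda>j. (b * of_real q) ^ j / qpoch (of_real q) (of_real q) j
              * qpoch_inf (u * v * of_real q ^ j) (of_real q)
              / (qpoch_inf (u * z1 * of_real q ^ j) (of_real q) * qpoch_inf (v * z2 * of_real q ^ j) (of_real q)))
      \<and> summable (\<lambda>j. qpoch (u * z1) (of_real q) j * qpoch (v * z2) (of_real q) j
              / (qpoch (of_real q) (of_real q) j * qpoch (u * v) (of_real q) j) * (b * of_real q) ^ j)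
      \<and> qpoch_inf (b * of_real q) (of_real q) *
           (\<Sum>j. (b * of_real q) ^ j / qpoch (of_real q) (of_real q) j
              * qpoch_inf (u * v * of_real q ^ j) (of_real q)
              / (qpoch_inf (u * z1 * of_real q ^ j) (of_real q) * qpoch_inf (v * z2 * of_real q ^ j) (of_real q)))
        = qpoch_inf (b * of_real q) (of_real q) * qpoch_inf (u * v) (of_real q)
            / (qpoch_inf (u * z1) (of_real q) * qpoch_inf (v * z2) (of_real q))
          * (\<Sum>j. qpoch (u * z1) (of_real q) j * qpoch (v * z2) (of_real q) j
              / (qpoch (of_real q) (of_real q) j * qpoch (u * v) (of_real q) j) * (b * of_real q) ^ j)"
    using part_i_full[OF assms(1,2,3)] by blast
  have P2: "\<forall>c :: complex. norm (c * of_real q) < 1 \<and> b \<noteq> 0 \<longrightarrow>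
      (\<lambda>j. qpoch (c / b) (of_real q) j / qpoch (of_real q) (of_real q) j
          * (b * of_real (q powr (real (m + n) / 2 + 1))) ^ j
          * (qp (z1 * of_real (q powr (real j / 2))) (z2 * of_real (q powr (real j / 2))) c (of_real q) m n
             / qpoch_inf (c * of_real q) (of_real q)))
      sums (qp z1 z2 b (of_real q) m n / qpoch_inf (b * of_real q) (of_real q))"
    using part_ii[OF assms(1,2,3)] by blast
  note P3 = part_iiia[OF assms(1,2,3)]
  have P4: "(\<lambda>k. (- b * of_real (q powr (real (m + n) / 2 + 1))) ^ k / qpoch (of_real q) (of_real q) k
          * of_real q ^ (k choose 2)
          * qp (z1 * of_real (q powr (real k / 2))) (z2 * of_real (q powr (real k / 2))) b (of_real q) m n)
      sums (qH z1 z2 (of_real q) m n * qpoch_inf (b * of_real q) (of_real q))"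
    by (rule part_iiib[OF assms(1,2,3)])
  have Dnz: "qpoch_inf (b * of_real q) (complex_of_real q) \<noteq> 0" by (rule qpoch_inf_nz[OF nQ nb])
  have P5: "qH z1 z2 (of_real q) m n = 1 / qpoch_inf (b * of_real q) (of_real q) *
      (\<Sum>k. (- b * of_real (q powr (real (m + n) / 2 + 1))) ^ k / qpoch (of_real q) (of_real q) k
          * of_real q ^ (k choose 2)
          * qp (z1 * of_real (q powr (real k / 2))) (z2 * of_real (q powr (real k / 2))) b (of_real q) m n)"
    unfolding sums_unique[OF P4, symmetric] using Dnz by simp
  show ?thesis using P1 P2 P3 sums_summable[OF P4] P5 by blast
qed


end
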